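(* Let $N\ge3$, $\mathcal H_{\boldsymbol n,\nu}$ an irreducible unitary representation of $\mathrm{SO}^\circ(N,1)$ and $f=\sum f(\boldsymbol k,\kappa)u(\boldsymbol k,\kappa)\in\mathcal H_{\boldsymbol n,\nu}$. Define $g=\sum_{\lambda\in\Lambda}\sum_{\boldsymbol p\in M_\lambda}g(\boldsymbol p,\lambda)u(\boldsymbol p,\lambda)$ by $g(\boldsymbol m-e_k,\lambda)=\sum_{\boldsymbol k\in M_\lambda}\frac{f(\boldsymbol k,\lambda)}{A^-_k(\boldsymbol m,\lambda)}\mathcal D^{\boldsymbol m,\lambda}(\boldsymbol k,\lambda)$ if $N=2k$, and with $B^-_k$ in place of $A^-_k$ if $N=2k+1$ (for all $\boldsymbol m$ with $\boldsymbol m-e_k\in M_\lambda$), assuming the series involved converge. Then $g$ is a formal solution of $Xg=f$ (i.e. the coefficients of $Xg$, computed formally from the action of $X$ on the basis, equal those of $f$) if and only if $\mathcal D^{\boldsymbol m,\lambda}(f)=0$ for all $(\boldsymbol m,\lambda)$ with $\lambda\in\Lambda$ and $\boldsymbol m\in\lfloor M_\lambda\rfloor$.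
   Context: Let $N\ge 3$ and $k=\lfloor N/2\rfloor$, $G=\mathrm{SO}^\circ(N,1)$, $X=\begin{pmatrix}\mathbf 0_N&e_N\\ e_N^t&0\end{pmatrix}$, $K=\mathrm{SO}(N)$, $M=\mathrm{SO}(N-1)$ the centralizer of $X$ in $K$. Representations (Hirai). Irreducible unitary representations $\mathcal H_{\boldsymbol n,\nu}$ are indexed by integers $\boldsymbol n$ and a complex $\nu$: for $N=2k$, $\boldsymbol n=(n_1,\dots,n_{k-1})$, $0\le n_1\le\dots\le n_{k-1}$; for $N=2k+1$, $\boldsymbol n=(n_1,\dots,n_k)$, $|n_1|\le n_2\le\dots\le n_k$; $\nu\in i\mathbb R_{\ge0}$ (principal series), or $\nu$ real in $(0,\frac{N-1}2]$ (complementary series and end-points), or $\nu\in\mathbb Z_{>0}-\frac12$ (discrete series, $N$ even). $\lceil\boldsymbol n\rceil$ is the last entry of $\boldsymbol n$. The $K$-types are $\mathcal H_{\boldsymbol m}$, each with multiplicity one, for $\boldsymbol m=(m_1,\dots,m_k)\in\mathbb Z^k$ in the set $M_{\boldsymbol n}$ defined by $|m_1|\le n_1\le m_2\le n_2\le\dots\le n_{k-1}\le m_k$ ($N=2k$), resp. $|n_1|\le m_1\le n_2\le m_2\le\dots\le n_k\le m_k$ ($N=2k+1$); $\lceil\boldsymbol m\rceil:=m_k$. $\mathcal H_{\boldsymbol m}$ has an orthonormal Gelfand–Cejtlin basis, adapted to $\mathrm{SO}(N)\supset\mathrm{SO}(N-1)=M\supset\dots\supset\mathrm{SO}(2)$,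 indexed by the set $\Lambda_{\boldsymbol m}$ of integer arrays $\lambda=(\lambda^{(i)}_j)_{1\le i\le N-2,\,1\le j\le\lceil i/2\rceil}$ such that, with $\lambda^{(N-1)}:=\boldsymbol m$, for each $1\le i\le N-2$: if $i=2p-1$, $|\lambda^{(i)}_1|\le\lambda^{(i+1)}_1\le\lambda^{(i)}_2\le\dots\le\lambda^{(i)}_p\le\lambda^{(i+1)}_p$; if $i=2p$, $|\lambda^{(i+1)}_1|\le\lambda^{(i)}_1\le\lambda^{(i+1)}_2\le\dots\le\lambda^{(i)}_p\le\lambda^{(i+1)}_{p+1}$. $\lceil\lambda\rceil$ is the last entry of the top row $\lambda^{(N-2)}$. This gives an orthonormal basis $\{u(\boldsymbol m,\lambda)\}$ of $\mathcal H_{\boldsymbol n,\nu}$; write $f=\sum f(\boldsymbol m,\lambda)u(\boldsymbol m,\lambda)$. Let $\Lambda=\bigcup_{\boldsymbol m}\Lambda_{\boldsymbol m}$, $M_\lambda=\{\boldsymbol m\in M_{\boldsymbol n}:\lambda\in\Lambda_{\boldsymbol m}\}$, $m_\lambda=\min\{\lceil\boldsymbol m\rceil:\boldsymbol m\in M_\lambda\}=\max\{\lceil\boldsymbol n\rceil,\lceil\lambda\rceil\}$, and $\lfloor M_\lambda\rfloor=\{\boldsymbol m\in M_\lambda:\lceil\boldsymbol m\rceil=m_\lambda\}$. Action of $X$. For $N=2k$: $Xu(\boldsymbol m,\lambda)=\sum_{j=1}^k A^-_j(\boldsymbol m,\lambda)u(\boldsymbol m-e_j,\lambda)+\sum_{j=1}^kA^+_j(\boldsymbol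 m,\lambda)u(\boldsymbol m+e_j,\lambda)$, where $e_j$ is the standard basis of $\mathbb Z^k$, $A^-_j(\boldsymbol m,\lambda)=A^+_j(\boldsymbol m-e_j,\lambda)$, and, with $x_r=\lambda^{(2k-2)}_r+r$, $y_j=m_j+j-1$, $z_r=n_r+r-\frac12$, $A_j^+(\boldsymbol m,\lambda)=\frac12\Big(\frac{\prod_{r=1}^{k-1}[(x_r-\frac12)^2-(y_j+\frac12)^2][z_r^2-(y_j+\frac12)^2]\cdot[\nu^2-(y_j+\frac12)^2]}{\prod_{r\ne j}(y_r^2-y_j^2)[y_r^2-(y_j+1)^2]}\Big)^{1/2}$ when $j=k$ or $m_j\ne m_{j+1}$, and $0$ otherwise (terms with indices outside the admissible range vanish). For $N=2k+1$: $Xu(\boldsymbol m,\lambda)=\sum_jB^-_j(\boldsymbol m,\lambda)u(\boldsymbol m-e_j,\lambda)+C(\boldsymbol m,\lambda)u(\boldsymbol m,\lambda)+\sum_jB^+_j(\boldsymbol m,\lambda)u(\boldsymbol m+e_j,\lambda)$, $B^-_j(\boldsymbol m,\lambda)=B^+_j(\boldsymbol m-e_j,\lambda)$, and with $x_r=\lambda^{(2k-1)}_r+r-1$, $y_j=m_j+j$, $z_r=n_r+r-1$: $B^+_j=\Big(\frac{\prod_{r=1}^k(x_r^2-y_j^2)\prod_{r=1}^k(z_r^2-y_j^2)(\nu^2-y_j^2)}{y_j^2(4y_j^2-1)\prod_{r\ne j}(y_r^2-y_j^2)[(y_r-1)^2-y_j^2]}\Big)^{1/2}$, $C=\frac{(\prod_{r=1}^kx_r)(\prod_{r=1}^kz_r)\nu}{\prod_{r=1}^ky_r(y_r-1)}$.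 The functionals $\mathcal D^{\boldsymbol m,\lambda}$. Fix $\lambda\in\Lambda$. For $N=2k$ and $\boldsymbol m,\boldsymbol k\in M_\lambda$, $\mathcal P(\boldsymbol m,\boldsymbol k)$ is the set of sequences $p=(p(1),\dots,p(l+1))$ in $M_\lambda$, $p(1)=\boldsymbol m$, $p(l+1)=\boldsymbol k$, $|p|:=l\ge0$, with steps $h(s)=p(s+1)-p(s)\in\{e_k\pm e_j:1\le j\le k-1\}\cup\{2e_k\}$; weights $\alpha_{e_k\pm e_j}(\boldsymbol p)=A^\pm_j(\boldsymbol p,\lambda)/A^-_k(\boldsymbol p+e_k\pm e_j,\lambda)$, $\alpha_{2e_k}(\boldsymbol p)=A^+_k(\boldsymbol p,\lambda)/A^-_k(\boldsymbol p+2e_k,\lambda)$; $\mathcal D^{\boldsymbol m,\lambda}(\boldsymbol k,\lambda)=\sum_{p\in\mathcal P(\boldsymbol m,\boldsymbol k)}(-1)^{|p|}\prod_{s=1}^{|p|}\alpha_{h(s)}(p(s))$. For $N=2k+1$, use instead the set $\widetilde{\mathcal P}(\boldsymbol m,\boldsymbol k)$ where steps may also be $e_k$, with weights $\beta_{e_k\pm e_j}(\boldsymbol p)=B^\pm_j(\boldsymbol p,\lambda)/B^-_k(\boldsymbol p+e_k\pm e_j,\lambda)$, $\beta_{e_k}(\boldsymbol p)=C(\boldsymbol p,\lambda)/B^-_k(\boldsymbol p+e_k,\lambda)$, $\beta_{2e_k}(\boldsymbol p)=B^+_k(\boldsymbol p,\lambda)/B^-_k(\boldsymbol p+2e_k,\lambda)$.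 Empty sums are $0$, empty products $1$ (so $\mathcal D^{\boldsymbol m,\lambda}(\boldsymbol m,\lambda)=1$). Set $\mathcal D^{\boldsymbol m,\lambda}(\boldsymbol k,\kappa)=0$ for $\kappa\ne\lambda$ and $\mathcal D^{\boldsymbol m,\lambda}(f)=\sum_{\kappa\in\Lambda}\sum_{\boldsymbol k\in M_\kappa}f(\boldsymbol k,\kappa)\mathcal D^{\boldsymbol m,\lambda}(\boldsymbol k,\kappa)$. *)

theory Defs
  imports "HOL-Analysis.Analysis"
begin

text \<open>Integer vectors in Z^k (the K-type labels m, the parameters n) are int lists;
  entries are accessed 1-based via ent.  The vector v + d e_j is shift v j d.
  A Gelfand-Cejtlin array lambda is an int list list whose (i-1)-th element is the
  row lambda^(i), i = 1..N-2.\<close>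

definition kk :: "nat \<Rightarrow> nat" where "kk N = N div 2"

definition ent :: "int list \<Rightarrow> nat \<Rightarrow> int" where "ent v j = v ! (j - 1)"

definition shift :: "int list \<Rightarrow> nat \<Rightarrow> int \<Rightarrow> int list" where
  "shift v j d = v[j - 1 := v ! (j - 1) + d]"

definition interlaceA :: "int list \<Rightarrow> int list \<Rightarrow> bool" where
  "interlaceA a b \<longleftrightarrow> length b = length a \<and>
     (length a \<ge> 1 \<longrightarrow> \<bar>ent a 1\<bar> \<le> ent b 1) \<and>
     (\<forall>j\<in>{1..length a}. ent a j \<le> ent b j) \<and>
     (\<forall>j\<in>{1..<length a}. ent b j \<le> ent a (j + 1))"

definition interlaceB :: "int list \<Rightarrow> int list \<Rightarrow> bool" where
  "interlaceB a b \<longleftrightarrow> length b = length a + 1 \<and>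
     (length a \<ge> 1 \<longrightarrow> \<bar>ent b 1\<bar> \<le> ent a 1) \<and>
     (\<forall>j\<in>{1..length a}. ent b j \<le> ent a j \<and> ent a j \<le> ent b (j + 1))"

definition valid_n :: "nat \<Rightarrow> int list \<Rightarrow> bool" where
  "valid_n N n \<longleftrightarrow>
     (if even N then length n = kk N - 1 \<and>
        (length n \<ge> 1 \<longrightarrow> 0 \<le> ent n 1) \<and> (\<forall>j\<in>{1..<length n}. ent n j \<le> ent n (j + 1))
      else length n = kk N \<and>
        (length n \<ge> 2 \<longrightarrow> \<bar>ent n 1\<bar> \<le> ent n 2) \<and>
        (\<forall>j\<in>{2..<length n}. ent n j \<le> ent n (j + 1)))"

definition valid_nu :: "nat \<Rightarrow> complex \<Rightarrow> bool" where
  "valid_nu N \<nu> \<longleftrightarrow>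
     (Re \<nu> = 0 \<and> Im \<nu> \<ge> 0) \<or>
     (Im \<nu> = 0 \<and> 0 < Re \<nu> \<and> Re \<nu> \<le> (real N - 1) / 2) \<or>
     (even N \<and> (\<exists>j::int. j > 0 \<and> \<nu> = of_int j - 1 / 2))"

definition Ktypes :: "nat \<Rightarrow> int list \<Rightarrow> int list set" where
  "Ktypes N n = {m. if even N then interlaceB n m else interlaceA n m}"

definition GC :: "nat \<Rightarrow> int list \<Rightarrow> int list list set" where
  "GC N m = {lam. length lam = N - 2 \<and>
     (\<forall>i\<in>{1..N - 2}. length (lam ! (i - 1)) = (i + 1) div 2 \<and>
        (let up = (if i = N - 2 then m else lam ! i) in
         if odd i then interlaceA (lam ! (i - 1)) up else interlaceB (lam ! (i - 1)) up))}"

definition Lam :: "nat \<Rightarrow> int list \<Rightarrow> int list list set" where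
  "Lam N n = (\<Union>m\<in>Ktypes N n. GC N m)"

definition Mlam :: "nat \<Rightarrow> int list \<Rightarrow> int list list \<Rightarrow> int list set" where
  "Mlam N n lam = {m \<in> Ktypes N n. lam \<in> GC N m}"

definition floorM :: "nat \<Rightarrow> int list \<Rightarrow> int list list \<Rightarrow> int list set" where
  "floorM N n lam = {m \<in> Mlam N n lam. \<forall>m'\<in>Mlam N n lam. last m \<le> last m'}"

text \<open>index set of the orthonormal basis u(m, lambda)\<close>
definition Idx :: "nat \<Rightarrow> int list \<Rightarrow> (int list \<times> int list list) set" where
  "Idx N n = {(m, lam). m \<in> Ktypes N n \<and> lam \<in> GC N m}"

text \<open>N = 2k: A^+_j(m, lambda); the top row of lambda is last lam = lambda^(N-2)\<close>
definition Aplus :: "nat \<Rightarrow> int list \<Rightarrow> complex \<Rightarrow> int list list \<Rightarrow> nat \<Rightarrow> int list \<Rightarrow> complex" where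
  "Aplus N n \<nu> lam j m =
    (let k = kk N;
         x = (\<lambda>r. of_int (ent (last lam) r) + of_nat r :: complex);
         y = (\<lambda>i. of_int (ent m i) + of_nat i - 1 :: complex);
         z = (\<lambda>r. of_int (ent n r) + of_nat r - 1 / 2 :: complex)
     in if j = k \<or> ent m j \<noteq> ent m (j + 1) then
          1 / 2 * csqrt (
            (\<Prod>r\<in>{1..k - 1}. ((x r - 1 / 2)\<^sup>2 - (y j + 1 / 2)\<^sup>2) * ((z r)\<^sup>2 - (y j + 1 / 2)\<^sup>2))
              * (\<nu>\<^sup>2 - (y j + 1 / 2)\<^sup>2)
            / (\<Prod>r\<in>{1..k} - {j}. ((y r)\<^sup>2 - (y j)\<^sup>2) * ((y r)\<^sup>2 - (y j + 1)\<^sup>2)))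
        else 0)"

definition Bplus :: "nat \<Rightarrow> int list \<Rightarrow> complex \<Rightarrow> int list list \<Rightarrow> nat \<Rightarrow> int list \<Rightarrow> complex" where
  "Bplus N n \<nu> lam j m =
    (let k = kk N;
         x = (\<lambda>r. of_int (ent (last lam) r) + of_nat r - 1 :: complex);
         y = (\<lambda>i. of_int (ent m i) + of_nat i :: complex);
         z = (\<lambda>r. of_int (ent n r) + of_nat r - 1 :: complex)
     in csqrt (
          (\<Prod>r\<in>{1..k}. (x r)\<^sup>2 - (y j)\<^sup>2) * (\<Prod>r\<in>{1..k}. (z r)\<^sup>2 - (y j)\<^sup>2) * (\<nu>\<^sup>2 - (y j)\<^sup>2)
          / ((y j)\<^sup>2 * (4 * (y j)\<^sup>2 - 1) *
             (\<Prod>r\<in>{1..k} - {j}. ((y r)\<^sup>2 - (y j)\<^sup>2) * ((y r - 1)\<^sup>2 - (y j)\<^sup>2)))))"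

definition Cdiag :: "nat \<Rightarrow> int list \<Rightarrow> complex \<Rightarrow> int list list \<Rightarrow> int list \<Rightarrow> complex" where
  "Cdiag N n \<nu> lam m =
    (let k = kk N;
         x = (\<lambda>r. of_int (ent (last lam) r) + of_nat r - 1 :: complex);
         y = (\<lambda>i. of_int (ent m i) + of_nat i :: complex);
         z = (\<lambda>r. of_int (ent n r) + of_nat r - 1 :: complex)
     in (\<Prod>r\<in>{1..k}. x r) * (\<Prod>r\<in>{1..k}. z r) * \<nu> / (\<Prod>r\<in>{1..k}. y r * (y r - 1)))"

definition Xup :: "nat \<Rightarrow> int list \<Rightarrow> complex \<Rightarrow> int list list \<Rightarrow> nat \<Rightarrow> int list \<Rightarrow> complex" where
  "Xup N n \<nu> lam j m = (if even N then Aplus N n \<nu> lam j m else Bplus N n \<nu> lam j m)"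

definition Xdown :: "nat \<Rightarrow> int list \<Rightarrow> complex \<Rightarrow> int list list \<Rightarrow> nat \<Rightarrow> int list \<Rightarrow> complex" where
  "Xdown N n \<nu> lam j m = Xup N n \<nu> lam j (shift m j (-1))"

text \<open>Coefficient of u(p, lambda) in X g, computed formally from
  X u(q,lambda) = sum_j Xdown_j(q) u(q - e_j) + [N odd] C(q) u(q) + sum_j Xup_j(q) u(q + e_j),
  where terms whose index leaves M_lambda vanish.\<close>
definition Xapply :: "nat \<Rightarrow> int list \<Rightarrow> complex \<Rightarrow> (int list \<times> int list list \<Rightarrow> complex)
    \<Rightarrow> int list \<times> int list list \<Rightarrow> complex" where
  "Xapply N n \<nu> g pl =
    (case pl of (p, lam) \<Rightarrow>
      (\<Sum>j\<in>{1..kk N}.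
          (if shift p j 1 \<in> Mlam N n lam
           then Xdown N n \<nu> lam j (shift p j 1) * g (shift p j 1, lam) else 0)
        + (if shift p j (-1) \<in> Mlam N n lam
           then Xup N n \<nu> lam j (shift p j (-1)) * g (shift p j (-1), lam) else 0))
      + (if odd N then Cdiag N n \<nu> lam p * g (p, lam) else 0))"

definition is_step :: "nat \<Rightarrow> int list \<Rightarrow> int list \<Rightarrow> bool" where
  "is_step N p q \<longleftrightarrow>
     (\<exists>j\<in>{1..<kk N}. q = shift (shift p (kk N) 1) j 1 \<or> q = shift (shift p (kk N) 1) j (-1))
     \<or> q = shift p (kk N) 2 \<or> (odd N \<and> q = shift p (kk N) 1)"

definition paths :: "nat \<Rightarrow> int list \<Rightarrow> int list list \<Rightarrow> int list \<Rightarrow> int list \<Rightarrow> int list list set" where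
  "paths N n lam m q = {ps. ps \<noteq> [] \<and> hd ps = m \<and> last ps = q \<and> set ps \<subseteq> Mlam N n lam \<and>
      (\<forall>i. i + 1 < length ps \<longrightarrow> is_step N (ps ! i) (ps ! (i + 1)))}"

definition weight :: "nat \<Rightarrow> int list \<Rightarrow> complex \<Rightarrow> int list list \<Rightarrow> int list \<Rightarrow> int list \<Rightarrow> complex" where
  "weight N n \<nu> lam p q =
    (let k = kk N in
     (\<Sum>j\<in>{1..<k}.
        (if q = shift (shift p k 1) j 1 then Xup N n \<nu> lam j p / Xdown N n \<nu> lam k q else 0)
      + (if q = shift (shift p k 1) j (-1) then Xdown N n \<nu> lam j p / Xdown N n \<nu> lam k q else 0))
     + (if q = shift p k 2 then Xup N n \<nu> lam k p / Xdown N n \<nu> lam k q else 0)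
     + (if odd N \<and> q = shift p k 1 then Cdiag N n \<nu> lam p / Xdown N n \<nu> lam k q else 0))"

definition Dcoef :: "nat \<Rightarrow> int list \<Rightarrow> complex \<Rightarrow> int list list \<Rightarrow> int list \<Rightarrow> int list \<Rightarrow> complex" where
  "Dcoef N n \<nu> lam m q =
     (\<Sum>ps\<in>paths N n lam m q.
        (-1) ^ (length ps - 1) * prod_list (map2 (weight N n \<nu> lam) ps (tl ps)))"

definition Dfun :: "nat \<Rightarrow> int list \<Rightarrow> complex \<Rightarrow> int list \<Rightarrow> int list list
    \<Rightarrow> int list \<times> int list list \<Rightarrow> complex" where
  "Dfun N n \<nu> m lam qk = (case qk of (q, kap) \<Rightarrow> if kap = lam then Dcoef N n \<nu> lam m q else 0)"

definition Dapply :: "nat \<Rightarrow> int list \<Rightarrow> complex \<Rightarrow> int list \<Rightarrow> int list list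
    \<Rightarrow> (int list \<times> int list list \<Rightarrow> complex) \<Rightarrow> complex" where
  "Dapply N n \<nu> m lam f = (\<Sum>\<^sub>\<infinity>qk\<in>Idx N n. f qk * Dfun N n \<nu> m lam qk)"

end

theory Submission
  imports Defs
begin


lemma length_shift[simp]: "length (shift v j d) = length v"
  by (simp add: shift_def)

lemma nth_shift: "shift v j d ! i = (if i = j - 1 \<and> i < length v then v ! i + d else v ! i)"
  by (cases "j - 1 < length v") (auto simp: shift_def nth_list_update list_update_beyond)

lemma ent_shift: "1 \<le> i \<Longrightarrow> 1 \<le> j \<Longrightarrow>
   ent (shift v j d) i = ent v i + (if i = j \<and> j \<le> length v then d else 0)"
  by (auto simp: ent_def nth_shift)

lemma shift_shift_same: "shift (shift v j a) j b = shift v j (a + b)"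
  by (cases "j - 1 < length v") (auto simp: shift_def nth_list_update list_update_beyond add.assoc)

lemma shift_comm: "shift (shift v i a) j b = shift (shift v j b) i a"
  by (rule nth_equalityI) (auto simp: nth_shift)

lemma shift_zero[simp]: "shift v j 0 = v"
  by (simp add: shift_def)

lemma L3A: "interlaceA a b \<Longrightarrow> interlaceA a b' \<Longrightarrow> ent b' (length b) \<le> x
   \<Longrightarrow> interlaceA a (b[length b - 1 := x])"
proof -
  assume A: "interlaceA a b" and B: "interlaceA a b'" and C: "ent b' (length b) \<le> x"
  let ?p = "length a"
  have lb: "length b = ?p" and lb': "length b' = ?p" using A B by (auto simp: interlaceA_def)
  have last': "?p \<ge> 1 \<Longrightarrow> a ! (?p - 1) \<le> x"
  proof -
    assume "?p \<ge> 1"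
    then have "ent a ?p \<le> ent b' ?p" using B unfolding interlaceA_def by auto
    then show ?thesis using C lb by (simp add: ent_def)
  qed
  have last1: "?p = 1 \<Longrightarrow> \<bar>a ! 0\<bar> \<le> x"
  proof -
    assume "?p = 1"
    then have "\<bar>ent a 1\<bar> \<le> ent b' 1" using B unfolding interlaceA_def by auto
    then show ?thesis using C lb \<open>?p = 1\<close> by (simp add: ent_def)
  qed
  have h1: "length (b[length b - 1 := x]) = length a" using lb by simp
  have h2: "1 \<le> ?p \<longrightarrow> \<bar>ent a 1\<bar> \<le> ent (b[length b - 1 := x]) 1"
  proof
    assume p1: "1 \<le> ?p"
    have "\<bar>ent a 1\<bar> \<le> ent b 1" using A p1 unfolding interlaceA_def by auto
    then show "\<bar>ent a 1\<bar> \<le> ent (b[length b - 1 := x]) 1"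
      using lb last1 p1 unfolding ent_def by (cases "?p = 1") (auto simp: nth_list_update)
  qed
  have h3: "\<forall>j\<in>{1..?p}. ent a j \<le> ent (b[length b - 1 := x]) j"
  proof
    fix j assume j: "j \<in> {1..?p}"
    have "ent a j \<le> ent b j" using A j unfolding interlaceA_def by auto
    then show "ent a j \<le> ent (b[length b - 1 := x]) j"
      using j lb last' unfolding ent_def by (auto simp: nth_list_update)
  qed
  have h4: "\<forall>j\<in>{1..<?p}. ent (b[length b - 1 := x]) j \<le> ent a (j + 1)"
  proof
    fix j assume j: "j \<in> {1..<?p}"
    have "ent b j \<le> ent a (j + 1)" using A j unfolding interlaceA_def by auto
    then show "ent (b[length b - 1 := x]) j \<le> ent a (j + 1)"
      using j lb unfolding ent_def by (auto simp: nth_list_update)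
  qed
  show ?thesis using h1 h2 h3 h4 unfolding interlaceA_def by blast
qed

lemma L3B: "interlaceB a b \<Longrightarrow> interlaceB a b' \<Longrightarrow> ent b' (length b) \<le> x
   \<Longrightarrow> interlaceB a (b[length b - 1 := x])"
proof -
  assume A: "interlaceB a b" and B: "interlaceB a b'" and C: "ent b' (length b) \<le> x"
  let ?p = "length a"
  have lb: "length b = ?p + 1" and lb': "length b' = ?p + 1" using A B by (auto simp: interlaceB_def)
  have last': "?p \<ge> 1 \<Longrightarrow> a ! (?p - 1) \<le> x"
  proof -
    assume "?p \<ge> 1"
    then have "ent a ?p \<le> ent b' (?p + 1)" using B unfolding interlaceB_def by auto
    then show ?thesis using C lb by (simp add: ent_def)
  qed
  have h1: "length (b[length b - 1 := x]) = length a + 1" using lb by simp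
  have h2: "1 \<le> ?p \<longrightarrow> \<bar>ent (b[length b - 1 := x]) 1\<bar> \<le> ent a 1" using A lb unfolding interlaceB_def ent_def
      by (cases a) (auto simp: nth_list_update)
  have h3: "\<forall>j\<in>{1..?p}. ent (b[length b - 1 := x]) j \<le> ent a j \<and> ent a j \<le> ent (b[length b - 1 := x]) (j + 1)"
  proof
    fix j assume j: "j \<in> {1..?p}"
    have "ent b j \<le> ent a j \<and> ent a j \<le> ent b (j + 1)" using A j unfolding interlaceB_def by auto
    then show "ent (b[length b - 1 := x]) j \<le> ent a j \<and> ent a j \<le> ent (b[length b - 1 := x]) (j + 1)"
      using j lb last' unfolding ent_def by (auto simp: nth_list_update)
  qed
  show ?thesis using h1 h2 h3 unfolding interlaceB_def by blast
qed




lemma G3: "lam \<in> GC N b \<Longrightarrow> lam \<in> GC N b' \<Longrightarrow> length b' = length b \<Longrightarrow> ent b' (length b) \<le> x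
   \<Longrightarrow> lam \<in> GC N (b[length b - 1 := x])"
proof -
  assume A0: "lam \<in> GC N b" and B0: "lam \<in> GC N b'" and l: "length b' = length b" and C: "ent b' (length b) \<le> x"
  have A: "length lam = N - 2 \<and> (\<forall>i\<in>{1..N - 2}. length (lam ! (i - 1)) = (i + 1) div 2 \<and>
      (let up = if i = N - 2 then b else lam ! i in if odd i then interlaceA (lam ! (i - 1)) up else interlaceB (lam ! (i - 1)) up))"
    using A0 unfolding GC_def by blast
  have B: "length lam = N - 2 \<and> (\<forall>i\<in>{1..N - 2}. length (lam ! (i - 1)) = (i + 1) div 2 \<and>
      (let up = if i = N - 2 then b' else lam ! i in if odd i then interlaceA (lam ! (i - 1)) up else interlaceB (lam ! (i - 1)) up))"
    using B0 unfolding GC_def by blast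
  have "length lam = N - 2 \<and> (\<forall>i\<in>{1..N - 2}. length (lam ! (i - 1)) = (i + 1) div 2 \<and>
      (let up = if i = N - 2 then b[length b - 1 := x] else lam ! i in if odd i then interlaceA (lam ! (i - 1)) up else interlaceB (lam ! (i - 1)) up))"
  proof (intro conjI ballI)
    show "length lam = N - 2" using A by simp
  next
    fix i assume i: "i \<in> {1..N-2}"
    show "length (lam ! (i - 1)) = (i + 1) div 2" using A i by auto
  next
    fix i assume i: "i \<in> {1..N-2}"
    have a: "if odd i then interlaceA (lam ! (i - 1)) (if i = N - 2 then b else lam ! i)
             else interlaceB (lam ! (i - 1)) (if i = N - 2 then b else lam ! i)"
      using bspec[OF conjunct2[OF A] i] unfolding Let_def by blast
    have bb: "if odd i then interlaceA (lam ! (i - 1)) (if i = N - 2 then b' else lam ! i)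
             else interlaceB (lam ! (i - 1)) (if i = N - 2 then b' else lam ! i)"
      using bspec[OF conjunct2[OF B] i] unfolding Let_def by blast
    have "if odd i then interlaceA (lam ! (i - 1)) (if i = N - 2 then b[length b - 1 := x] else lam ! i)
             else interlaceB (lam ! (i - 1)) (if i = N - 2 then b[length b - 1 := x] else lam ! i)"
    proof (cases "i = N - 2")
      case True
      then show ?thesis using a bb L3A[of "lam ! (i - 1)" b b' x] L3B[of "lam ! (i - 1)" b b' x] C l
        by (cases "odd i") auto
    next
      case False
      then show ?thesis using a by (simp only: if_False)
    qed
    then show "let up = if i = N - 2 then b[length b - 1 := x] else lam ! i in if odd i then interlaceA (lam ! (i - 1)) up else interlaceB (lam ! (i - 1)) up"
      by (simp only: Let_def)
  qed
  then show ?thesis unfolding GC_def by blast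
qed

lemma K3: "b \<in> Ktypes N n \<Longrightarrow> b' \<in> Ktypes N n \<Longrightarrow> ent b' (length b) \<le> x
   \<Longrightarrow> b[length b - 1 := x] \<in> Ktypes N n"
  unfolding Ktypes_def using L3A[of n b b' x] L3B[of n b b' x] by (auto split: if_splits)

context
  fixes N :: nat and n :: "int list"
  assumes N3: "N \<ge> 3" and n_ok: "valid_n N n"
begin

lemma k_pos: "kk N \<ge> 1" using N3 by (simp add: kk_def)

lemma len_K: "m \<in> Ktypes N n \<Longrightarrow> length m = kk N"
  using n_ok N3 unfolding Ktypes_def valid_n_def interlaceA_def interlaceB_def kk_def
  by (auto split: if_splits)

lemma len_M: "m \<in> Mlam N n lam \<Longrightarrow> length m = kk N"
  using len_K by (simp add: Mlam_def)

lemma M3: "b \<in> Mlam N n lam \<Longrightarrow> b' \<in> Mlam N n lam \<Longrightarrow> ent b' (kk N) \<le> x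
   \<Longrightarrow> b[kk N - 1 := x] \<in> Mlam N n lam"
  using K3[of b N n b' x] G3[of lam N b b' x] len_M[of b lam] len_M[of b' lam]
  by (simp add: Mlam_def)

lemma shift_k_upd: "length v = kk N \<Longrightarrow> shift v (kk N) d = v[kk N - 1 := ent v (kk N) + d]"
  by (simp add: shift_def ent_def)

lemma F2: "v \<in> Mlam N n lam \<Longrightarrow> 0 \<le> d \<Longrightarrow> shift v (kk N) d \<in> Mlam N n lam"
  using M3[of v lam v "ent v (kk N) + d"] shift_k_upd[of v d] len_M[of v lam] by simp

lemma F3: "1 \<le> j \<Longrightarrow> j < kk N \<Longrightarrow> v \<in> Mlam N n lam \<Longrightarrow>
   shift (shift v (kk N) 1) j d \<in> Mlam N n lam \<longleftrightarrow> shift v j d \<in> Mlam N n lam"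
proof
  assume j: "1 \<le> j" "j < kk N" and v: "v \<in> Mlam N n lam"
  have eq: "shift (shift v (kk N) 1) j d = shift (shift v j d) (kk N) 1" by (rule shift_comm)
  { assume "shift v j d \<in> Mlam N n lam"
    then show "shift (shift v (kk N) 1) j d \<in> Mlam N n lam" using eq F2 by simp }
  { assume w: "shift (shift v (kk N) 1) j d \<in> Mlam N n lam"
    have "(shift (shift v (kk N) 1) j d)[kk N - 1 := ent v (kk N)] = shift v j d"
      using j len_M[OF v] k_pos by (intro nth_equalityI) (auto simp: nth_shift nth_list_update ent_def)
    moreover have "(shift (shift v (kk N) 1) j d)[kk N - 1 := ent v (kk N)] \<in> Mlam N n lam"
      using M3[OF w v] by simp
    ultimately show "shift v j d \<in> Mlam N n lam" by simp }
qed

lemma last_ent: "length v = kk N \<Longrightarrow> last v = ent v (kk N)"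
  using k_pos by (cases v rule: rev_cases) (auto simp: ent_def nth_append)

lemma F4: "m \<in> floorM N n lam \<longleftrightarrow> m \<in> Mlam N n lam \<and> shift m (kk N) (-1) \<notin> Mlam N n lam"
proof
  assume "m \<in> floorM N n lam"
  then have m: "m \<in> Mlam N n lam" and mn: "\<forall>m'\<in>Mlam N n lam. last m \<le> last m'" by (auto simp: floorM_def)
  have "shift m (kk N) (-1) \<notin> Mlam N n lam"
  proof
    assume s: "shift m (kk N) (-1) \<in> Mlam N n lam"
    have "last (shift m (kk N) (-1)) = last m - 1"
      using len_M[OF m] k_pos last_ent[of m] last_ent[of "shift m (kk N) (-1)"] ent_shift[of "kk N" "kk N" m "-1"] by simp
    then show False using mn s by force
  qed
  then show "m \<in> Mlam N n lam \<and> shift m (kk N) (-1) \<notin> Mlam N n lam" using m by simp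
next
  assume A: "m \<in> Mlam N n lam \<and> shift m (kk N) (-1) \<notin> Mlam N n lam"
  have "\<forall>m'\<in>Mlam N n lam. last m \<le> last m'"
  proof
    fix m' assume m': "m' \<in> Mlam N n lam"
    show "last m \<le> last m'"
    proof (rule ccontr)
      assume "\<not> last m \<le> last m'"
      then have "ent m' (kk N) \<le> ent m (kk N) + (-1)"
        using A m' len_M last_ent by auto
      then have "m[kk N - 1 := ent m (kk N) + (-1)] \<in> Mlam N n lam" using M3[of m lam m'] A m' by simp
      then show False using A shift_k_upd[of m "-1"] len_M[of m lam] by simp
    qed
  qed
  then show "m \<in> floorM N n lam" using A by (simp add: floorM_def)
qed

end

lemma Idx_iff: "(m, lam) \<in> Idx N n \<longleftrightarrow> lam \<in> Lam N n \<and> m \<in> Mlam N n lam"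
  by (auto simp: Idx_def Lam_def Mlam_def)




definition stp :: "nat \<Rightarrow> int list list \<Rightarrow> bool" where
  "stp N ps \<longleftrightarrow> (\<forall>i. i + 1 < length ps \<longrightarrow> is_step N (ps ! i) (ps ! (i + 1)))"

lemma stp_Cons: "stp N (m # rest) \<longleftrightarrow> (rest \<noteq> [] \<longrightarrow> is_step N m (hd rest)) \<and> stp N rest"
proof
  assume A: "stp N (m # rest)"
  have 1: "rest \<noteq> [] \<longrightarrow> is_step N m (hd rest)"
    using A[unfolded stp_def, rule_format, of 0] by (cases rest) auto
  have 2: "stp N rest" unfolding stp_def
  proof (intro allI impI)
    fix i assume "i + 1 < length rest"
    then show "is_step N (rest ! i) (rest ! (i + 1))" using A[unfolded stp_def, rule_format, of "Suc i"] by simp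
  qed
  show "(rest \<noteq> [] \<longrightarrow> is_step N m (hd rest)) \<and> stp N rest" using 1 2 by simp
next
  assume A: "(rest \<noteq> [] \<longrightarrow> is_step N m (hd rest)) \<and> stp N rest"
  show "stp N (m # rest)" unfolding stp_def
  proof (intro allI impI)
    fix i assume i: "i + 1 < length (m # rest)"
    show "is_step N ((m # rest) ! i) ((m # rest) ! (i + 1))"
    proof (cases i)
      case 0 then show ?thesis using A i by (cases rest) auto
    next
      case (Suc i') then show ?thesis using A i unfolding stp_def by auto
    qed
  qed
qed

lemma paths_stp: "paths N n lam m q = {ps. ps \<noteq> [] \<and> hd ps = m \<and> last ps = q \<and> set ps \<subseteq> Mlam N n lam \<and> stp N ps}"
  by (simp add: paths_def stp_def)

definition stepset :: "nat \<Rightarrow> int list \<Rightarrow> int list set" where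
  "stepset N m = (\<lambda>j. shift (shift m (kk N) 1) j 1) ` {1..<kk N} \<union> (\<lambda>j. shift (shift m (kk N) 1) j (-1)) ` {1..<kk N}
     \<union> {shift m (kk N) 2, shift m (kk N) 1}"

lemma finite_stepset: "finite (stepset N m)" by (simp add: stepset_def)

lemma is_step_stepset: "is_step N m m' \<Longrightarrow> m' \<in> stepset N m"
  unfolding is_step_def stepset_def by auto

definition reach :: "nat \<Rightarrow> int list \<Rightarrow> int list list \<Rightarrow> nat \<Rightarrow> int list \<Rightarrow> int list list set" where
  "reach N n lam L m = {ps. length ps = Suc L \<and> hd ps = m \<and> stp N ps}"

lemma finite_reach: "finite (reach N n lam L m)"
proof (induction L arbitrary: m)
  case 0
  have "reach N n lam 0 m \<subseteq> {[m]}"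
    by (auto simp: reach_def length_Suc_conv)
  then show ?case using finite_subset by blast
next
  case (Suc L)
  have "reach N n lam (Suc L) m \<subseteq> (\<lambda>ps. m # ps) ` (\<Union>m'\<in>stepset N m. reach N n lam L m')"
  proof
    fix ps assume ps: "ps \<in> reach N n lam (Suc L) m"
    then obtain rest where r: "ps = m # rest" and lr: "length rest = Suc L"
      by (cases ps) (auto simp: reach_def)
    then have "rest \<noteq> []" by auto
    then have "is_step N m (hd rest)" "stp N rest" using ps r stp_Cons[of N m rest] by (auto simp: reach_def)
    then have "rest \<in> reach N n lam L (hd rest)" "hd rest \<in> stepset N m"
      using lr is_step_stepset by (auto simp: reach_def)
    then show "ps \<in> (\<lambda>ps. m # ps) ` (\<Union>m'\<in>stepset N m. reach N n lam L m')" using r by blast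
  qed
  moreover have "finite ((\<lambda>ps. m # ps) ` (\<Union>m'\<in>stepset N m. reach N n lam L m'))"
    using Suc finite_stepset by blast
  ultimately show ?case using finite_subset by blast
qed

definition succ :: "nat \<Rightarrow> int list \<Rightarrow> int list list \<Rightarrow> int list \<Rightarrow> int list set" where
  "succ N n lam m = {m' \<in> Mlam N n lam. is_step N m m'}"

context
  fixes N :: nat and n :: "int list"
  assumes N3: "N \<ge> 3" and n_ok: "valid_n N n"
begin

lemma is_step_incr: "length p = kk N \<Longrightarrow> is_step N p q \<Longrightarrow> ent q (kk N) \<ge> ent p (kk N) + 1"
  using k_pos[OF N3 n_ok] unfolding is_step_def by (auto simp: ent_shift)

lemma path_incr:
  assumes "set ps \<subseteq> Mlam N n lam" "stp N ps" "i < length ps"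
  shows "ent (ps ! i) (kk N) \<ge> ent (ps ! 0) (kk N) + int i"
  using assms(3)
proof (induction i)
  case 0 then show ?case by simp
next
  case (Suc i)
  have "ps ! i \<in> Mlam N n lam" using assms(1) Suc.prems by auto
  then have "length (ps ! i) = kk N" using len_M[OF N3 n_ok] by blast
  moreover have "is_step N (ps ! i) (ps ! (i + 1))" using assms(2) Suc.prems unfolding stp_def by auto
  ultimately have "ent (ps ! Suc i) (kk N) \<ge> ent (ps ! i) (kk N) + 1" using is_step_incr by simp
  then show ?case using Suc by simp
qed

lemma finite_paths: "finite (paths N n lam m q)"
proof -
  let ?B = "nat (ent q (kk N) - ent m (kk N))"
  have "paths N n lam m q \<subseteq> (\<Union>L\<in>{..?B}. reach N n lam L m)"
  proof
    fix ps assume ps: "ps \<in> paths N n lam m q"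
    then have ne: "ps \<noteq> []" and h: "hd ps = m" and l: "last ps = q" and s: "set ps \<subseteq> Mlam N n lam" and st: "stp N ps"
      by (auto simp: paths_stp)
    have "ent (ps ! (length ps - 1)) (kk N) \<ge> ent (ps ! 0) (kk N) + int (length ps - 1)"
      using path_incr[OF s st, of "length ps - 1"] ne by simp
    then have "ent q (kk N) \<ge> ent m (kk N) + int (length ps - 1)"
      using ne h l by (simp add: hd_conv_nth last_conv_nth)
    then have "length ps - 1 \<le> ?B" by linarith
    moreover have "ps \<in> reach N n lam (length ps - 1) m" using ne h st by (simp add: reach_def)
    ultimately show "ps \<in> (\<Union>L\<in>{..?B}. reach N n lam L m)" by blast
  qed
  moreover have "finite (\<Union>L\<in>{..?B}. reach N n lam L m)" by (intro finite_UN_I) (auto simp: finite_reach)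
  ultimately show ?thesis by (rule finite_subset)
qed


lemma finite_succ: "finite (succ N n lam m)"
  using finite_stepset[of N m] is_step_stepset[of N m] unfolding succ_def
  by (metis (no_types, lifting) finite_subset mem_Collect_eq subsetI)

lemma paths_decomp:
  assumes m: "m \<in> Mlam N n lam"
  shows "paths N n lam m q = (if m = q then {[m]} else {}) \<union> (\<Union>m'\<in>succ N n lam m. (\<lambda>ps. m # ps) ` paths N n lam m' q)"
proof (rule set_eqI)
  fix ps
  show "ps \<in> paths N n lam m q \<longleftrightarrow> ps \<in> (if m = q then {[m]} else {}) \<union> (\<Union>m'\<in>succ N n lam m. (\<lambda>ps. m # ps) ` paths N n lam m' q)"
  proof
    assume ps: "ps \<in> paths N n lam m q"
    then obtain rest where r: "ps = m # rest" by (cases ps) (auto simp: paths_stp)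
    show "ps \<in> (if m = q then {[m]} else {}) \<union> (\<Union>m'\<in>succ N n lam m. (\<lambda>ps. m # ps) ` paths N n lam m' q)"
    proof (cases "rest = []")
      case True then show ?thesis using ps r by (auto simp: paths_stp)
    next
      case False
      then have "is_step N m (hd rest)" "stp N rest" using ps r stp_Cons[of N m rest] by (auto simp: paths_stp)
      moreover have "set rest \<subseteq> Mlam N n lam" "last rest = q" using ps r False by (auto simp: paths_stp)
      ultimately have "rest \<in> paths N n lam (hd rest) q" "hd rest \<in> succ N n lam m"
        using False by (auto simp: paths_stp succ_def)
      then show ?thesis using r by blast
    qed
  next
    assume "ps \<in> (if m = q then {[m]} else {}) \<union> (\<Union>m'\<in>succ N n lam m. (\<lambda>ps. m # ps) ` paths N n lam m' q)"
    then show "ps \<in> paths N n lam m q"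
    proof
      assume "ps \<in> (if m = q then {[m]} else {})"
      then show ?thesis using m by (auto simp: paths_stp stp_def split: if_splits)
    next
      assume "ps \<in> (\<Union>m'\<in>succ N n lam m. (\<lambda>ps. m # ps) ` paths N n lam m' q)"
      then obtain m' rest where m': "m' \<in> succ N n lam m" and r: "rest \<in> paths N n lam m' q" and ps: "ps = m # rest" by blast
      have "rest \<noteq> []" "hd rest = m'" "stp N rest" "set rest \<subseteq> Mlam N n lam" "last rest = q" using r by (auto simp: paths_stp)
      then show ?thesis using ps m m' stp_Cons[of N m rest] by (auto simp: paths_stp succ_def)
    qed
  qed
qed

lemma Dcoef_rec:
  assumes m: "m \<in> Mlam N n lam"
  shows "Dcoef N n \<nu> lam m q = (if m = q then 1 else 0) - (\<Sum>m'\<in>succ N n lam m. weight N n \<nu> lam m m' * Dcoef N n \<nu> lam m' q)"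
proof -
  let ?F = "\<lambda>ps. (-1::complex) ^ (length ps - 1) * prod_list (map2 (weight N n \<nu> lam) ps (tl ps))"
  let ?A = "(if m = q then {[m]} else {}) :: int list list set"
  let ?B = "\<Union>m'\<in>succ N n lam m. (\<lambda>ps. m # ps) ` paths N n lam m' q"
  have fB: "finite ?B" using finite_succ finite_paths by blast
  have disj: "?A \<inter> ?B = {}" by (auto simp: paths_stp)
  have h1: "Dcoef N n \<nu> lam m q = sum ?F ?A + sum ?F ?B"
    unfolding Dcoef_def paths_decomp[OF m] by (rule sum.union_disjoint) (use fB disj in auto)
  have h2: "sum ?F ?A = (if m = q then 1 else 0)" by simp
  have h3: "sum ?F ?B = (\<Sum>m'\<in>succ N n lam m. sum ?F ((\<lambda>ps. m # ps) ` paths N n lam m' q))"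
    by (rule sum.UNION_disjoint) (use finite_succ finite_paths in \<open>auto simp: paths_stp\<close>)
  have h4: "sum ?F ((\<lambda>ps. m # ps) ` paths N n lam m' q) = - (weight N n \<nu> lam m m' * Dcoef N n \<nu> lam m' q)"
    if m': "m' \<in> succ N n lam m" for m'
  proof -
    have "sum ?F ((\<lambda>ps. m # ps) ` paths N n lam m' q) = sum (?F \<circ> (\<lambda>ps. m # ps)) (paths N n lam m' q)"
      by (rule sum.reindex) simp
    also have "\<dots> = (\<Sum>ps\<in>paths N n lam m' q. - (weight N n \<nu> lam m m' * ?F ps))"
    proof (rule sum.cong)
      fix ps assume ps: "ps \<in> paths N n lam m' q"
      then obtain r where r: "ps = m' # r" by (cases ps) (auto simp: paths_stp)
      show "(?F \<circ> (\<lambda>ps. m # ps)) ps = - (weight N n \<nu> lam m m' * ?F ps)"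
        using r by simp
    qed simp
    also have "\<dots> = - (weight N n \<nu> lam m m' * Dcoef N n \<nu> lam m' q)"
      by (simp add: Dcoef_def sum_distrib_left sum_negf)
    finally show ?thesis .
  qed
  have h5: "sum ?F ?B = (\<Sum>m'\<in>succ N n lam m. - (weight N n \<nu> lam m m' * Dcoef N n \<nu> lam m' q))"
    unfolding h3 by (rule sum.cong[OF refl]) (rule h4)
  show ?thesis unfolding h1 h2 h5 sum_negf by simp
qed

end



lemma infsum_sum_fin:
  fixes h :: "'i \<Rightarrow> 'a \<Rightarrow> complex"
  assumes "finite I" "\<And>i. i \<in> I \<Longrightarrow> h i summable_on A"
  shows "(\<lambda>x. \<Sum>i\<in>I. h i x) summable_on A \<and> infsum (\<lambda>x. \<Sum>i\<in>I. h i x) A = (\<Sum>i\<in>I. infsum (h i) A)"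
  using assms
proof (induction I rule: finite_induct)
  case empty then show ?case by simp
next
  case (insert i I)
  then have s1: "h i summable_on A" and s2: "(\<lambda>x. \<Sum>i\<in>I. h i x) summable_on A"
    and e: "infsum (\<lambda>x. \<Sum>i\<in>I. h i x) A = (\<Sum>i\<in>I. infsum (h i) A)" by auto
  have "(\<lambda>x. h i x + (\<Sum>i\<in>I. h i x)) summable_on A" using summable_on_add[OF s1 s2] .
  moreover have "infsum (\<lambda>x. h i x + (\<Sum>i\<in>I. h i x)) A = infsum (h i) A + (\<Sum>i\<in>I. infsum (h i) A)"
    using infsum_add[OF s1 s2] e by simp
  ultimately show ?case using insert.hyps by simp
qed

definition GG :: "nat \<Rightarrow> int list \<Rightarrow> complex \<Rightarrow> int list list \<Rightarrow> (int list \<times> int list list \<Rightarrow> complex) \<Rightarrow> int list \<Rightarrow> complex" where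
  "GG N n \<nu> lam f m = (\<Sum>\<^sub>\<infinity>q\<in>Mlam N n lam. f (q, lam) * Dcoef N n \<nu> lam m q)"

context
  fixes N :: nat and n :: "int list" and \<nu> :: complex and f g :: "int list \<times> int list list \<Rightarrow> complex"
    and lam :: "int list list"
  assumes N3: "N \<ge> 3" and n_ok: "valid_n N n"
    and conv: "\<forall>m\<in>Mlam N n lam. (\<lambda>q. f (q, lam) * Dcoef N n \<nu> lam m q) summable_on Mlam N n lam"
    and nonzero: "\<forall>m. shift m (kk N) (-1) \<in> Mlam N n lam \<longrightarrow> Xdown N n \<nu> lam (kk N) m \<noteq> 0"
    and gdef: "\<forall>m. shift m (kk N) (-1) \<in> Mlam N n lam \<longrightarrow>
                  g (shift m (kk N) (-1), lam) =
                    (\<Sum>\<^sub>\<infinity>q\<in>Mlam N n lam. f (q, lam) / Xdown N n \<nu> lam (kk N) m * Dcoef N n \<nu> lam m q)"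
begin

lemma frel:
  assumes m: "m \<in> Mlam N n lam"
  shows "f (m, lam) = GG N n \<nu> lam f m + (\<Sum>m'\<in>succ N n lam m. weight N n \<nu> lam m m' * GG N n \<nu> lam f m')"
proof -
  let ?M = "Mlam N n lam"
  let ?S = "succ N n lam m"
  let ?h = "\<lambda>m' q. weight N n \<nu> lam m m' * (f (q, lam) * Dcoef N n \<nu> lam m' q)"
  have fS: "finite ?S" using finite_succ[OF N3 n_ok] .
  have SM: "?S \<subseteq> ?M" by (auto simp: succ_def)
  have sh: "?h m' summable_on ?M" if "m' \<in> ?S" for m'
    using conv SM that by (intro summable_on_cmult_right) auto
  note IS = infsum_sum_fin[OF fS sh]
  have s0: "(\<lambda>q. f (q, lam) * Dcoef N n \<nu> lam m q) summable_on ?M" using conv m by auto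
  have pt: "f (q, lam) * Dcoef N n \<nu> lam m q + (\<Sum>m'\<in>?S. ?h m' q) = (if q = m then f (q, lam) else 0)" for q
  proof -
    have e: "Dcoef N n \<nu> lam m q + (\<Sum>m'\<in>?S. weight N n \<nu> lam m m' * Dcoef N n \<nu> lam m' q) = (if q = m then 1 else 0)"
      using Dcoef_rec[OF N3 n_ok m, of \<nu> q] by auto
    have "f (q, lam) * Dcoef N n \<nu> lam m q + (\<Sum>m'\<in>?S. ?h m' q)
       = f (q, lam) * (Dcoef N n \<nu> lam m q + (\<Sum>m'\<in>?S. weight N n \<nu> lam m m' * Dcoef N n \<nu> lam m' q))"
      by (simp add: distrib_left sum_distrib_left mult_ac)
    then show ?thesis using e by simp
  qed
  have "infsum (\<lambda>q. f (q, lam) * Dcoef N n \<nu> lam m q + (\<Sum>m'\<in>?S. ?h m' q)) ?M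
      = GG N n \<nu> lam f m + (\<Sum>m'\<in>?S. infsum (?h m') ?M)"
    using infsum_add[OF s0 conjunct1[OF IS]] conjunct2[OF IS] by (simp add: GG_def)
  also have "(\<Sum>m'\<in>?S. infsum (?h m') ?M) = (\<Sum>m'\<in>?S. weight N n \<nu> lam m m' * GG N n \<nu> lam f m')"
    by (simp add: GG_def infsum_cmult_right')
  finally have A: "infsum (\<lambda>q. f (q, lam) * Dcoef N n \<nu> lam m q + (\<Sum>m'\<in>?S. ?h m' q)) ?M
      = GG N n \<nu> lam f m + (\<Sum>m'\<in>?S. weight N n \<nu> lam m m' * GG N n \<nu> lam f m')" .
  have "infsum (\<lambda>q. f (q, lam) * Dcoef N n \<nu> lam m q + (\<Sum>m'\<in>?S. ?h m' q)) ?M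
      = infsum (\<lambda>q. if q = m then f (q, lam) else 0) ?M" by (simp only: pt)
  also have "\<dots> = infsum (\<lambda>q. if q = m then f (q, lam) else 0) {m}"
    by (rule infsum_cong_neutral) (use m in auto)
  also have "\<dots> = f (m, lam)" by simp
  finally show ?thesis using A by simp
qed

lemma gval:
  assumes p: "p \<in> Mlam N n lam"
  shows "g (p, lam) = GG N n \<nu> lam f (shift p (kk N) 1) / Xdown N n \<nu> lam (kk N) (shift p (kk N) 1)"
proof -
  let ?m = "shift p (kk N) 1"
  have e: "shift ?m (kk N) (-1) = p" by (simp add: shift_shift_same)
  have "g (p, lam) = (\<Sum>\<^sub>\<infinity>q\<in>Mlam N n lam. f (q, lam) / Xdown N n \<nu> lam (kk N) ?m * Dcoef N n \<nu> lam ?m q)"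
    using gdef[rule_format, of ?m] e p by simp
  also have "\<dots> = (\<Sum>\<^sub>\<infinity>q\<in>Mlam N n lam. f (q, lam) * Dcoef N n \<nu> lam ?m q * inverse (Xdown N n \<nu> lam (kk N) ?m))"
    by (simp add: divide_inverse mult_ac)
  also have "\<dots> = GG N n \<nu> lam f ?m / Xdown N n \<nu> lam (kk N) ?m"
    by (simp add: infsum_cmult_left' GG_def divide_inverse)
  finally show ?thesis .
qed

lemma weight_pt:
  "weight N n \<nu> lam m m' * GG N n \<nu> lam f m' =
    (\<Sum>j\<in>{1..<kk N}.
       (if m' = shift (shift m (kk N) 1) j 1 then Xup N n \<nu> lam j m / Xdown N n \<nu> lam (kk N) (shift (shift m (kk N) 1) j 1) * GG N n \<nu> lam f (shift (shift m (kk N) 1) j 1) else 0)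
     + (if m' = shift (shift m (kk N) 1) j (-1) then Xdown N n \<nu> lam j m / Xdown N n \<nu> lam (kk N) (shift (shift m (kk N) 1) j (-1)) * GG N n \<nu> lam f (shift (shift m (kk N) 1) j (-1)) else 0))
    + (if m' = shift m (kk N) 2 then Xup N n \<nu> lam (kk N) m / Xdown N n \<nu> lam (kk N) (shift m (kk N) 2) * GG N n \<nu> lam f (shift m (kk N) 2) else 0)
    + (if odd N then (if m' = shift m (kk N) 1 then Cdiag N n \<nu> lam m / Xdown N n \<nu> lam (kk N) (shift m (kk N) 1) * GG N n \<nu> lam f (shift m (kk N) 1) else 0) else 0)"
  unfolding weight_def Let_def distrib_right sum_distrib_right
  by (intro arg_cong2[where f="(+)"] sum.cong refl) auto

lemma Wexp:
  assumes m: "m \<in> Mlam N n lam"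
  shows "(\<Sum>m'\<in>succ N n lam m. weight N n \<nu> lam m m' * GG N n \<nu> lam f m') =
    (\<Sum>j\<in>{1..<kk N}.
       (if shift m j 1 \<in> Mlam N n lam then Xup N n \<nu> lam j m / Xdown N n \<nu> lam (kk N) (shift (shift m (kk N) 1) j 1) * GG N n \<nu> lam f (shift (shift m (kk N) 1) j 1) else 0)
     + (if shift m j (-1) \<in> Mlam N n lam then Xdown N n \<nu> lam j m / Xdown N n \<nu> lam (kk N) (shift (shift m (kk N) 1) j (-1)) * GG N n \<nu> lam f (shift (shift m (kk N) 1) j (-1)) else 0))
    + Xup N n \<nu> lam (kk N) m / Xdown N n \<nu> lam (kk N) (shift m (kk N) 2) * GG N n \<nu> lam f (shift m (kk N) 2)
    + (if odd N then Cdiag N n \<nu> lam m / Xdown N n \<nu> lam (kk N) (shift m (kk N) 1) * GG N n \<nu> lam f (shift m (kk N) 1) else 0)" (is "_ = ?R")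
proof -
  let ?S = "succ N n lam m"
  let ?M = "Mlam N n lam"
  let ?k = "kk N"
  have fS: "finite ?S" using finite_succ[OF N3 n_ok] .
  have memU: "shift (shift m ?k 1) j d \<in> ?S \<longleftrightarrow> shift m j d \<in> ?M" if j: "j \<in> {1..<?k}" "d = 1 \<or> d = -1" for j d
  proof -
    have "is_step N m (shift (shift m ?k 1) j d)" using j unfolding is_step_def by auto
    then show ?thesis using F3[OF N3 n_ok, where j=j and v=m and lam=lam and d=d] j m by (auto simp: succ_def)
  qed
  have mem2: "shift m ?k 2 \<in> ?S" using F2[OF N3 n_ok m, of 2] by (auto simp: succ_def is_step_def)
  have mem1: "odd N \<Longrightarrow> shift m ?k 1 \<in> ?S" using F2[OF N3 n_ok m, of 1] by (auto simp: succ_def is_step_def)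
  have "(\<Sum>m'\<in>?S. weight N n \<nu> lam m m' * GG N n \<nu> lam f m') =
     (\<Sum>j\<in>{1..<?k}. (\<Sum>m'\<in>?S. (if m' = shift (shift m (kk N) 1) j 1 then Xup N n \<nu> lam j m / Xdown N n \<nu> lam (kk N) (shift (shift m (kk N) 1) j 1) * GG N n \<nu> lam f (shift (shift m (kk N) 1) j 1) else 0))
     + (\<Sum>m'\<in>?S. (if m' = shift (shift m (kk N) 1) j (-1) then Xdown N n \<nu> lam j m / Xdown N n \<nu> lam (kk N) (shift (shift m (kk N) 1) j (-1)) * GG N n \<nu> lam f (shift (shift m (kk N) 1) j (-1)) else 0)))
    + (\<Sum>m'\<in>?S. (if m' = shift m (kk N) 2 then Xup N n \<nu> lam (kk N) m / Xdown N n \<nu> lam (kk N) (shift m (kk N) 2) * GG N n \<nu> lam f (shift m (kk N) 2) else 0))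
    + (if odd N then (\<Sum>m'\<in>?S. (if m' = shift m (kk N) 1 then Cdiag N n \<nu> lam m / Xdown N n \<nu> lam (kk N) (shift m (kk N) 1) * GG N n \<nu> lam f (shift m (kk N) 1) else 0)) else 0)"
    unfolding weight_pt sum.distrib
    by (simp add: sum.distrib sum.swap[where A="succ N n lam m"])
  also have "\<dots> = ?R"
    using fS mem2 mem1 memU by (simp add: sum.delta)
  finally show ?thesis .
qed

lemma Xapp:
  assumes m: "m \<in> Mlam N n lam"
  shows "Xapply N n \<nu> g (m, lam) = (if shift m (kk N) (-1) \<in> Mlam N n lam then GG N n \<nu> lam f m else 0)
     + (\<Sum>m'\<in>succ N n lam m. weight N n \<nu> lam m m' * GG N n \<nu> lam f m')"
proof -
  let ?M = "Mlam N n lam"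
  let ?k = "kk N"
  let ?G = "GG N n \<nu> lam f"
  let ?Xu = "Xup N n \<nu> lam" and ?Xd = "Xdown N n \<nu> lam"
  have k1: "1 \<le> ?k" using k_pos[OF N3 n_ok] .
  define T where "T j = (if shift m j 1 \<in> ?M then ?Xd j (shift m j 1) * g (shift m j 1, lam) else 0)
        + (if shift m j (-1) \<in> ?M then ?Xu j (shift m j (-1)) * g (shift m j (-1), lam) else 0)" for j
  have X: "Xapply N n \<nu> g (m, lam) = (\<Sum>j\<in>{1..<?k}. T j) + T ?k + (if odd N then Cdiag N n \<nu> lam m * g (m, lam) else 0)"
  proof -
    have "{1..?k} = {1..<Suc ?k}" by auto
    then have "(\<Sum>j\<in>{1..?k}. T j) = (\<Sum>j\<in>{1..<?k}. T j) + T ?k" using k1 by (simp add: sum.atLeastLessThan_Suc)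
    then show ?thesis by (simp add: Xapply_def T_def)
  qed
  have Tj: "T j = (if shift m j 1 \<in> ?M then ?Xu j m / ?Xd ?k (shift (shift m ?k 1) j 1) * ?G (shift (shift m ?k 1) j 1) else 0)
     + (if shift m j (-1) \<in> ?M then ?Xd j m / ?Xd ?k (shift (shift m ?k 1) j (-1)) * ?G (shift (shift m ?k 1) j (-1)) else 0)"
    if j: "j \<in> {1..<?k}" for j
  proof -
    have a: "shift m j 1 \<in> ?M \<Longrightarrow> ?Xd j (shift m j 1) * g (shift m j 1, lam) = ?Xu j m / ?Xd ?k (shift (shift m ?k 1) j 1) * ?G (shift (shift m ?k 1) j 1)"
      using gval[of "shift m j 1"] by (simp add: Xdown_def shift_shift_same shift_comm[of m ?k])
    have b: "shift m j (-1) \<in> ?M \<Longrightarrow> ?Xu j (shift m j (-1)) * g (shift m j (-1), lam) = ?Xd j m / ?Xd ?k (shift (shift m ?k 1) j (-1)) * ?G (shift (shift m ?k 1) j (-1))"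
      using gval[of "shift m j (-1)"] by (simp add: Xdown_def shift_comm[of m ?k])
    show ?thesis using a b by (simp add: T_def)
  qed
  have Tk: "T ?k = ?Xu ?k m / ?Xd ?k (shift m ?k 2) * ?G (shift m ?k 2)
       + (if shift m ?k (-1) \<in> ?M then ?G m else 0)"
  proof -
    have m1: "shift m ?k 1 \<in> ?M" using F2[OF N3 n_ok m, of 1] by simp
    have a: "?Xd ?k (shift m ?k 1) * g (shift m ?k 1, lam) = ?Xu ?k m / ?Xd ?k (shift m ?k 2) * ?G (shift m ?k 2)"
      using gval[OF m1] by (simp add: Xdown_def shift_shift_same)
    have b: "shift m ?k (-1) \<in> ?M \<Longrightarrow> ?Xu ?k (shift m ?k (-1)) * g (shift m ?k (-1), lam) = ?G m"
    proof -
      assume s: "shift m ?k (-1) \<in> ?M"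
      have nz: "?Xd ?k m \<noteq> 0" using nonzero s by blast
      have "g (shift m ?k (-1), lam) = ?G m / ?Xd ?k m" using gval[OF s] by (simp add: shift_shift_same)
      then show ?thesis using nz by (simp add: Xdown_def)
    qed
    show ?thesis using a b m1 by (simp add: T_def)
  qed
  have C: "(if odd N then Cdiag N n \<nu> lam m * g (m, lam) else 0) =
      (if odd N then Cdiag N n \<nu> lam m / ?Xd ?k (shift m ?k 1) * ?G (shift m ?k 1) else 0)"
    using gval[OF m] by simp
  have S: "(\<Sum>j\<in>{1..<?k}. T j) = (\<Sum>j\<in>{1..<?k}. (if shift m j 1 \<in> ?M then ?Xu j m / ?Xd ?k (shift (shift m ?k 1) j 1) * ?G (shift (shift m ?k 1) j 1) else 0)
     + (if shift m j (-1) \<in> ?M then ?Xd j m / ?Xd ?k (shift (shift m ?k 1) j (-1)) * ?G (shift (shift m ?k 1) j (-1)) else 0))"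
    by (rule sum.cong[OF refl Tj])
  show ?thesis unfolding X Wexp[OF m] Tk C S by (simp only: add_ac)
qed

end



lemma Dapply_GG: "Dapply N n \<nu> m lam f = GG N n \<nu> lam f m"
proof -
  let ?F = "\<lambda>qk. f qk * Dfun N n \<nu> m lam qk"
  let ?h = "\<lambda>q. (q, lam)"
  have "Dapply N n \<nu> m lam f = infsum ?F (?h ` Mlam N n lam)"
    unfolding Dapply_def
    by (rule infsum_cong_neutral) (auto simp: Dfun_def Idx_def Mlam_def split: if_splits)
  also have "\<dots> = infsum (?F \<circ> ?h) (Mlam N n lam)"
    by (rule infsum_reindex) (auto simp: inj_on_def)
  also have "\<dots> = GG N n \<nu> lam f m" by (simp add: GG_def Dfun_def comp_def)
  finally show ?thesis .
qed

theorem mainTheorem9: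
  fixes N :: nat and n :: "int list" and \<nu> :: complex
    and f g :: "int list \<times> int list list \<Rightarrow> complex"
  assumes N3: "N \<ge> 3"
    and n_ok: "valid_n N n"
    and nu_ok: "valid_nu N \<nu>"
    and f_in_H: "(\<lambda>x. (norm (f x))\<^sup>2) summable_on Idx N n"
    and conv: "\<forall>lam\<in>Lam N n. \<forall>m\<in>Mlam N n lam.
                 (\<lambda>q. f (q, lam) * Dcoef N n \<nu> lam m q) summable_on Mlam N n lam"
    and nonzero: "\<forall>lam\<in>Lam N n. \<forall>m. shift m (kk N) (-1) \<in> Mlam N n lam \<longrightarrow>
                    Xdown N n \<nu> lam (kk N) m \<noteq> 0"
    and g_def: "\<forall>lam\<in>Lam N n. \<forall>m. shift m (kk N) (-1) \<in> Mlam N n lam \<longrightarrow>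
                  g (shift m (kk N) (-1), lam) =
                    (\<Sum>\<^sub>\<infinity>q\<in>Mlam N n lam. f (q, lam) / Xdown N n \<nu> lam (kk N) m * Dcoef N n \<nu> lam m q)"
  shows "(\<forall>pl\<in>Idx N n. Xapply N n \<nu> g pl = f pl) \<longleftrightarrow>
         (\<forall>lam\<in>Lam N n. \<forall>m\<in>floorM N n lam. Dapply N n \<nu> m lam f = 0)"
proof -
  have key: "Xapply N n \<nu> g (m, lam) = f (m, lam) \<longleftrightarrow> (m \<in> floorM N n lam \<longrightarrow> Dapply N n \<nu> m lam f = 0)"
    if lam: "lam \<in> Lam N n" and m: "m \<in> Mlam N n lam" for lam m
  proof -
    note c = bspec[OF conv lam] and nz = bspec[OF nonzero lam] and gd = bspec[OF g_def lam]
    have X: "Xapply N n \<nu> g (m, lam) = (if shift m (kk N) (-1) \<in> Mlam N n lam then GG N n \<nu> lam f m else 0)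
       + (\<Sum>m'\<in>succ N n lam m. weight N n \<nu> lam m m' * GG N n \<nu> lam f m')"
      by (rule Xapp[OF N3 n_ok c nz gd m])
    have F: "f (m, lam) = GG N n \<nu> lam f m + (\<Sum>m'\<in>succ N n lam m. weight N n \<nu> lam m m' * GG N n \<nu> lam f m')"
      by (rule frel[OF N3 n_ok c nz gd m])
    show ?thesis unfolding X F Dapply_GG F4[OF N3 n_ok] using m by auto
  qed
  show ?thesis
  proof
    assume A: "\<forall>pl\<in>Idx N n. Xapply N n \<nu> g pl = f pl"
    show "\<forall>lam\<in>Lam N n. \<forall>m\<in>floorM N n lam. Dapply N n \<nu> m lam f = 0"
    proof (intro ballI)
      fix lam m assume lam: "lam \<in> Lam N n" and m: "m \<in> floorM N n lam"
      then have mM: "m \<in> Mlam N n lam" by (simp add: floorM_def)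
      then have "Xapply N n \<nu> g (m, lam) = f (m, lam)" using A lam Idx_iff by blast
      then show "Dapply N n \<nu> m lam f = 0" using key[OF lam mM] m by blast
    qed
  next
    assume B: "\<forall>lam\<in>Lam N n. \<forall>m\<in>floorM N n lam. Dapply N n \<nu> m lam f = 0"
    show "\<forall>pl\<in>Idx N n. Xapply N n \<nu> g pl = f pl"
    proof
      fix pl assume pl: "pl \<in> Idx N n"
      obtain m lam where e: "pl = (m, lam)" by (cases pl)
      then have lam: "lam \<in> Lam N n" and m: "m \<in> Mlam N n lam" using pl Idx_iff by auto
      show "Xapply N n \<nu> g pl = f pl" using key[OF lam m] B lam e by blast
    qed
  qed
qed


end
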